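(* Let $B, M \in \mathbb{Z}$ with $M(B^2-4M)\neq 0$. Then every equivalence class (for the relation $\sim$ below) of locally soluble forms in $W^B_M(\mathbb{Q})$ contains exactly one element of $\mathcal{F}^B_M$. In particular, every locally soluble $f=ax^4+Bx^2y^2+cy^4\in W^B_M(\mathbb{Q})$ with $a\in\mathbb{Z}$ and $0\le \operatorname{ord}_p a\le 1$ for all primes $p$ has $c\in\mathbb{Z}$.
   Context: For integers $B,M$, let $W^B_M(\mathbb{Q})$ (resp. $W^B_M(\mathbb{Z})$) be the set of binary quartic forms $f(x,y)=ax^4+Bx^2y^2+cy^4$ with $a,c\in\mathbb{Q}$ (resp. $a,c\in\mathbb{Z}$) and $ac=M$. A form $f$ is called locally soluble if for every place $v$ of $\mathbb{Q}$ (including $v=\infty$, $\mathbb{Q}_\infty=\mathbb{R}$) there exist $x,y,z\in\mathbb{Q}_v$ with $(x,y)\neq(0,0)$ and $z^2=f(x,y)$. Two forms $ax^4+Bx^2y^2+cy^4$ and $a'x^4+Bx^2y^2+c'y^4$ in $W^B_M(\mathbb{Q})$ are equivalent ($\sim$) if $a'=s^2a$ and $c'=s^{-2}c$ for some $s\in\mathbb{Q}^*$. Define $\mathcal{F}^B_M=\{ax^4+Bx^2y^2+cy^4\in W^B_M(\mathbb{Z}) : 0\le \operatorname{ord}_p a\le 1 \text{ for all primes } p\}$. *)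

theory Defs
  imports Complex_Main "HOL-Computational_Algebra.Computational_Algebra"
begin

definition padic_ord :: "nat \<Rightarrow> rat \<Rightarrow> int" where
  "padic_ord p q = (let (n, d) = quotient_of q in
      int (multiplicity (int p) n) - int (multiplicity (int p) d))"

definition padic_abs :: "nat \<Rightarrow> rat \<Rightarrow> real" where
  "padic_abs p q = (if q = 0 then 0 else real p powr (- real_of_int (padic_ord p q)))"

text \<open>Q_p is the completion of Q w.r.t. the p-adic absolute value: its elements are
  classes of p-adic Cauchy sequences of rationals modulo null sequences.\<close>
definition padic_cauchy :: "nat \<Rightarrow> (nat \<Rightarrow> rat) \<Rightarrow> bool" where
  "padic_cauchy p X \<longleftrightarrow> (\<forall>e>0. \<exists>N. \<forall>m\<ge>N. \<forall>n\<ge>N. padic_abs p (X m - X n) < e)"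

definition padic_null :: "nat \<Rightarrow> (nat \<Rightarrow> rat) \<Rightarrow> bool" where
  "padic_null p X \<longleftrightarrow> (\<forall>e>0. \<exists>N. \<forall>n\<ge>N. padic_abs p (X n) < e)"

definition quartic :: "'a::field \<Rightarrow> 'a \<Rightarrow> 'a \<Rightarrow> 'a \<Rightarrow> 'a \<Rightarrow> 'a" where
  "quartic a B c x y = a * x ^ 4 + B * x ^ 2 * y ^ 2 + c * y ^ 4"

definition real_soluble :: "int \<Rightarrow> rat \<Rightarrow> rat \<Rightarrow> bool" where
  "real_soluble B a c \<longleftrightarrow> (\<exists>x y z :: real. (x, y) \<noteq> (0, 0) \<and>
      z ^ 2 = quartic (of_rat a) (of_int B) (of_rat c) x y)"

definition padic_soluble :: "nat \<Rightarrow> int \<Rightarrow> rat \<Rightarrow> rat \<Rightarrow> bool" where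
  "padic_soluble p B a c \<longleftrightarrow> (\<exists>X Y Z :: nat \<Rightarrow> rat.
      padic_cauchy p X \<and> padic_cauchy p Y \<and> padic_cauchy p Z \<and>
      \<not> (padic_null p X \<and> padic_null p Y) \<and>
      padic_null p (\<lambda>n. Z n ^ 2 - quartic a (of_int B) c (X n) (Y n)))"

definition locally_soluble :: "int \<Rightarrow> rat \<Rightarrow> rat \<Rightarrow> bool" where
  "locally_soluble B a c \<longleftrightarrow> real_soluble B a c \<and> (\<forall>p. prime p \<longrightarrow> padic_soluble p B a c)"

text \<open>The form a x^4 + B x^2 y^2 + c y^4 is represented by the pair (a, c).
  W^B_M(Q) = {(a,c) \<in> Q^2. a c = M}.\<close>
definition W_Q :: "int \<Rightarrow> (rat \<times> rat) set" where
  "W_Q M = {(a, c). a * c = of_int M}"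

definition form_equiv :: "rat \<times> rat \<Rightarrow> rat \<times> rat \<Rightarrow> bool" where
  "form_equiv f g \<longleftrightarrow> (\<exists>s::rat. s \<noteq> 0 \<and> fst g = s ^ 2 * fst f \<and> snd g = snd f / s ^ 2)"

definition F_set :: "int \<Rightarrow> (rat \<times> rat) set" where
  "F_set M = {(of_int a, of_int c) | a c :: int. a * c = M \<and>
      (\<forall>p::nat. prime p \<longrightarrow> 0 \<le> padic_ord p (of_int a) \<and> padic_ord p (of_int a) \<le> 1)}"

end

theory Submission imports Defs begin

lemma rat_repr: fixes x :: rat obtains a b :: int where "b \<noteq> 0" "x = of_int a / of_int b"
proof -
  obtain n d where q: "quotient_of x = (n,d)" by (cases "quotient_of x") auto
  show ?thesis using quotient_of_div[OF q] quotient_of_denom_pos[OF q] by (intro that[of d n]) auto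
qed

lemma ord_frac:
  assumes p: "prime p" and a: "a \<noteq> 0" and b: "b \<noteq> 0"
  shows "padic_ord p (of_int a / of_int b) = int (multiplicity (int p) a) - int (multiplicity (int p) b)"
proof -
  have pe: "prime_elem (int p)" using p by simp
  obtain n d where q: "quotient_of (of_int a / of_int b) = (n,d)" by (cases "quotient_of (of_int a / of_int b :: rat)") auto
  have eq: "(of_int a / of_int b :: rat) = of_int n / of_int d" using quotient_of_div[OF q] .
  have d: "d > 0" using quotient_of_denom_pos[OF q] .
  have n: "n \<noteq> 0" using eq a b d by auto
  have "(of_int (a*d) :: rat) = of_int (n*b)" using eq b d by (simp add: field_simps)
  hence ad: "a*d = n*b" by (simp only: of_int_eq_iff)
  have "multiplicity (int p) (a*d) = multiplicity (int p) (n*b)" using ad by simp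
  hence "multiplicity (int p) a + multiplicity (int p) d = multiplicity (int p) n + multiplicity (int p) b"
    using pe a b d n by (simp add: prime_elem_multiplicity_mult_distrib)
  thus ?thesis unfolding padic_ord_def q by simp
qed

lemma ord_int: assumes "prime p" shows "padic_ord p (of_int a) = int (multiplicity (int p) a)"
  unfolding padic_ord_def by simp

lemma ord_mult:
  assumes p: "prime p" and x: "x \<noteq> 0" and y: "y \<noteq> 0"
  shows "padic_ord p (x*y) = padic_ord p x + padic_ord p y"
proof -
  have pe: "prime_elem (int p)" using p by simp
  obtain a b where ab: "b \<noteq> 0" "x = of_int a / of_int b" by (rule rat_repr)
  obtain c e where ce: "e \<noteq> 0" "y = of_int c / of_int e" by (rule rat_repr)
  have a: "a \<noteq> 0" and c: "c \<noteq> 0" using ab ce x y by auto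
  have "x*y = of_int (a*c) / of_int (b*e)" using ab ce by simp
  hence "padic_ord p (x*y) = int (multiplicity (int p) (a*c)) - int (multiplicity (int p) (b*e))"
    using ord_frac[OF p, of "a*c" "b*e"] a c ab ce by simp
  also have "\<dots> = (int (multiplicity (int p) a) - int (multiplicity (int p) b)) + (int (multiplicity (int p) c) - int (multiplicity (int p) e))"
    using pe a c ab ce by (simp add: prime_elem_multiplicity_mult_distrib)
  finally show ?thesis using ord_frac[OF p a ab(1)] ord_frac[OF p c ce(1)] ab ce by simp
qed

lemma ord_add:
  assumes p: "prime p" and x: "x \<noteq> 0" and y: "y \<noteq> 0" and xy: "x + y \<noteq> 0"
  shows "padic_ord p (x+y) \<ge> min (padic_ord p x) (padic_ord p y)"
    and "padic_ord p x < padic_ord p y \<Longrightarrow> padic_ord p (x+y) = padic_ord p x"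
proof -
  have pe: "prime_elem (int p)" using p by simp
  obtain a b where ab: "b \<noteq> 0" "x = of_int a / of_int b" by (rule rat_repr)
  obtain c e where ce: "e \<noteq> 0" "y = of_int c / of_int e" by (rule rat_repr)
  have a: "a \<noteq> 0" and c: "c \<noteq> 0" using ab ce x y by auto
  define A where "A = a*e" define C where "C = c*b"
  have A: "A \<noteq> 0" and C: "C \<noteq> 0" using a c ab ce by (auto simp: A_def C_def)
  have xA: "x = of_int A / of_int (b*e)" and yC: "y = of_int C / of_int (b*e)" using ab ce by (simp_all add: A_def C_def)
  from xA yC have xs: "x + y = of_int (A + C) / of_int (b*e)" by (simp add: add_divide_distrib)
  have AC: "A + C \<noteq> 0" using xs xy by auto
  have be: "b*e \<noteq> 0" using ab ce by simp
  have ox: "padic_ord p x = int (multiplicity (int p) A) - int (multiplicity (int p) (b*e))"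
    using ord_frac[OF p A be] xA by simp
  have oy: "padic_ord p y = int (multiplicity (int p) C) - int (multiplicity (int p) (b*e))"
    using ord_frac[OF p C be] yC by simp
  have os: "padic_ord p (x+y) = int (multiplicity (int p) (A+C)) - int (multiplicity (int p) (b*e))"
    using ord_frac[OF p AC be] xs by simp
  let ?k = "min (multiplicity (int p) A) (multiplicity (int p) C)"
  have "int p ^ ?k dvd A" "int p ^ ?k dvd C"
    by (auto intro: multiplicity_dvd')
  hence "int p ^ ?k dvd A + C" by simp
  hence "multiplicity (int p) (A + C) \<ge> ?k" using multiplicity_geI[of "A+C" "int p"] AC pe by (auto dest: prime_elem_not_unit)
  thus "padic_ord p (x+y) \<ge> min (padic_ord p x) (padic_ord p y)" unfolding ox oy os by linarith
  assume "padic_ord p x < padic_ord p y"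
  hence "multiplicity (int p) A < multiplicity (int p) C" unfolding ox oy by simp
  hence "multiplicity (int p) (A + C) = multiplicity (int p) A" using A C by (rule multiplicity_sum_lt)
  thus "padic_ord p (x+y) = padic_ord p x" unfolding ox os by simp
qed


lemma ord_zero[simp]: "padic_ord p 0 = 0" unfolding padic_ord_def by simp

lemma ord_power: assumes p: "prime p" and x: "x \<noteq> 0" shows "padic_ord p (x^n) = int n * padic_ord p x"
  by (induction n) (auto simp: ord_mult[OF p] x algebra_simps ord_int[OF p, of 1, simplified])

lemma ord_minus: assumes p: "prime p" shows "padic_ord p (-x) = padic_ord p x"
proof (cases "x = 0")
  case False
  have "padic_ord p (-x) = padic_ord p (of_int (-1) * x)" by simp
  also have "\<dots> = padic_ord p x" using ord_mult[OF p, of "of_int (-1)" x] False ord_int[OF p, of "-1"] by simp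
  finally show ?thesis .
qed simp

definition dom :: "nat \<Rightarrow> rat \<Rightarrow> rat \<Rightarrow> bool" where
  "dom p x y \<longleftrightarrow> x \<noteq> 0 \<and> (y = 0 \<or> padic_ord p x < padic_ord p y)"

lemma dom_sum: assumes p: "prime p" and d: "dom p x y" shows "x + y \<noteq> 0 \<and> padic_ord p (x+y) = padic_ord p x"
proof (cases "y = 0")
  case True thus ?thesis using d by (simp add: dom_def)
next
  case False
  have x: "x \<noteq> 0" and lt: "padic_ord p x < padic_ord p y" using d False by (auto simp: dom_def)
  have nz: "x + y \<noteq> 0"
  proof
    assume "x + y = 0" hence "y = -x" by (simp add: eq_neg_iff_add_eq_0)
    with lt ord_minus[OF p, of x] show False by simp
  qed
  thus ?thesis using ord_add(2)[OF p x False nz lt] by simp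
qed

lemma ord_pos_le: assumes p: "prime p" "x \<noteq> 0" shows "padic_abs p x = real p powr (- real_of_int (padic_ord p x))"
  using p unfolding padic_abs_def by simp

lemma pointwise:
  fixes a c x y z :: rat and B :: int
  assumes p: "prime p" and a: "a \<noteq> 0" and c: "c \<noteq> 0"
    and oa: "odd (padic_ord p a)" and oac: "padic_ord p a + padic_ord p c = 0"
    and xy: "(x \<noteq> 0 \<and> padic_ord p x \<le> L) \<or> (y \<noteq> 0 \<and> padic_ord p y \<le> L)"
    and w: "z^2 - quartic a (of_int B) c x y = 0 \<or> padic_ord p (z^2 - quartic a (of_int B) c x y) > \<bar>padic_ord p a\<bar> + 4*L"
  shows False
proof -
  let ?T = "quartic a (of_int B) c x y"
  define t1 where "t1 = a * x^4" define t2 where "t2 = of_int B * x^2 * y^2" define t3 where "t3 = c * y^4"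
  have T: "?T = t1 + t3 + t2" unfolding quartic_def t1_def t2_def t3_def by simp
  have key: "?T \<noteq> 0 \<and> odd (padic_ord p ?T) \<and> padic_ord p ?T \<le> \<bar>padic_ord p a\<bar> + 4*L"
  proof (cases "x = 0")
    case True
    hence y: "y \<noteq> 0" "padic_ord p y \<le> L" using xy by auto
    have "?T = c * y^4" using True unfolding quartic_def by simp
    moreover have "padic_ord p (c*y^4) = padic_ord p c + 4 * padic_ord p y"
      using ord_mult[OF p c] ord_power[OF p y(1), of 4] y by simp
    ultimately show ?thesis using c y oa oac by auto presburger?
  next
    case x: False
    show ?thesis
    proof (cases "y = 0")
      case True
      hence xx: "padic_ord p x \<le> L" using xy by auto
      have "?T = a * x^4" using True unfolding quartic_def by simp
      moreover have "padic_ord p (a*x^4) = padic_ord p a + 4 * padic_ord p x"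
        using ord_mult[OF p a] ord_power[OF p x, of 4] x by simp
      ultimately show ?thesis using a x xx oa oac by auto
    next
      case y: False
      have o1: "padic_ord p t1 = padic_ord p a + 4 * padic_ord p x"
        using ord_mult[OF p a] ord_power[OF p x, of 4] x unfolding t1_def by simp
      have o3: "padic_ord p t3 = padic_ord p c + 4 * padic_ord p y"
        using ord_mult[OF p c] ord_power[OF p y, of 4] y unfolding t3_def by simp
      have t1: "t1 \<noteq> 0" "t3 \<noteq> 0" using a c x y unfolding t1_def t3_def by auto
      have o2: "t2 \<noteq> 0 \<Longrightarrow> padic_ord p t2 \<ge> 2 * padic_ord p x + 2 * padic_ord p y"
      proof -
        assume t2: "t2 \<noteq> 0"
        hence B: "B \<noteq> 0" unfolding t2_def by auto
        have "padic_ord p t2 = padic_ord p (of_int B) + (2 * padic_ord p x + 2 * padic_ord p y)"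
          unfolding t2_def using ord_mult[OF p] ord_power[OF p x, of 2] ord_power[OF p y, of 2] x y B
          by (simp add: mult.assoc)
        moreover have "padic_ord p (of_int B) \<ge> 0" using ord_int[OF p] by simp
        ultimately show ?thesis by simp
      qed
      have ne: "padic_ord p t1 \<noteq> padic_ord p t3"
      proof
        assume "padic_ord p t1 = padic_ord p t3"
        hence "padic_ord p a + 4 * padic_ord p x = - padic_ord p a + 4 * padic_ord p y" using o1 o3 oac by simp
        hence "2 * padic_ord p a = 4 * (padic_ord p y - padic_ord p x)" by simp
        hence "padic_ord p a = 2 * (padic_ord p y - padic_ord p x)" by simp
        with oa show False by simp
      qed
      show ?thesis
      proof (cases "padic_ord p t1 < padic_ord p t3")
        case True
        have d1: "dom p t1 t3" using True t1 unfolding dom_def by simp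
        from dom_sum[OF p d1] have s: "t1 + t3 \<noteq> 0" "padic_ord p (t1+t3) = padic_ord p t1" by auto
        have "dom p (t1+t3) t2" using s o2 True o1 o3 oac unfolding dom_def by force
        from dom_sum[OF p this] s have "?T \<noteq> 0 \<and> padic_ord p ?T = padic_ord p t1" using T by simp
        moreover have "padic_ord p t1 \<le> \<bar>padic_ord p a\<bar> + 4*L" using o1 o3 xy x y True oac by auto
        ultimately show ?thesis using o1 oa by simp
      next
        case False
        hence F: "padic_ord p t3 < padic_ord p t1" using ne by simp
        have d1: "dom p t3 t1" using F t1 unfolding dom_def by simp
        from dom_sum[OF p d1] have s: "t1 + t3 \<noteq> 0" "padic_ord p (t1+t3) = padic_ord p t3" by (auto simp: add.commute)
        have "dom p (t1+t3) t2" using s o2 F o1 o3 oac unfolding dom_def by force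
        from dom_sum[OF p this] s have "?T \<noteq> 0 \<and> padic_ord p ?T = padic_ord p t3" using T by simp
        moreover have "padic_ord p t3 \<le> \<bar>padic_ord p a\<bar> + 4*L" using o1 o3 xy x y F oac by auto
        moreover have "odd (padic_ord p t3)" using o3 oa oac by (metis add.commute eq_neg_iff_add_eq_0 even_add even_minus even_mult_iff even_numeral) 
        ultimately show ?thesis by simp
      qed
    qed
  qed
  define W where "W = z^2 - ?T"
  have zT: "z^2 = ?T + W" unfolding W_def by simp
  have "z^2 \<noteq> 0 \<and> padic_ord p (z^2) = padic_ord p ?T"
  proof (cases "W = 0")
    case True thus ?thesis using zT key by simp
  next
    case False
    hence "dom p ?T W" using w key unfolding W_def dom_def by auto
    from dom_sum[OF p this] zT show ?thesis by simp
  qed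
  moreover have "z \<noteq> 0" using calculation by auto
  ultimately have "padic_ord p ?T = 2 * padic_ord p z" using ord_power[OF p, of z 2] by simp
  with key show False by simp
qed


lemma ultra: assumes p: "prime p" shows "padic_abs p (x + y) \<le> max (padic_abs p x) (padic_abs p y)"
proof (cases "x = 0 \<or> y = 0 \<or> x + y = 0")
  case True thus ?thesis by (auto simp: padic_abs_def le_max_iff_disj)
next
  case False
  hence x: "x \<noteq> 0" and y: "y \<noteq> 0" and s: "x + y \<noteq> 0" by auto
  have p1: "real p > 1" using p prime_gt_1_nat by simp
  have m: "padic_ord p (x+y) \<ge> min (padic_ord p x) (padic_ord p y)" by (rule ord_add(1)[OF p x y s])
  show ?thesis
  proof (cases "padic_ord p x \<le> padic_ord p y")
    case True
    hence "padic_ord p (x+y) \<ge> padic_ord p x" using m by simp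
    hence "padic_abs p (x+y) \<le> padic_abs p x" using x s p1 by (simp add: padic_abs_def)
    thus ?thesis by simp
  next
    case False
    hence "padic_ord p (x+y) \<ge> padic_ord p y" using m by simp
    hence "padic_abs p (x+y) \<le> padic_abs p y" using y s p1 by (simp add: padic_abs_def)
    thus ?thesis by simp
  qed
qed

lemma bounded_below:
  assumes p: "prime p" and C: "padic_cauchy p X" and nn: "\<not> padic_null p X"
  shows "\<exists>L N. \<forall>n\<ge>N. X n \<noteq> 0 \<and> padic_ord p (X n) \<le> L"
proof -
  have p1: "real p > 1" using p prime_gt_1_nat by simp
  from nn obtain e where e: "e > 0" "\<forall>N. \<exists>n\<ge>N. padic_abs p (X n) \<ge> e"
    unfolding padic_null_def by (auto simp: not_less)
  from C e(1) obtain N where N: "\<forall>m\<ge>N. \<forall>n\<ge>N. padic_abs p (X m - X n) < e"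
    unfolding padic_cauchy_def by blast
  from e(2) obtain n0 where n0: "n0 \<ge> N" "padic_abs p (X n0) \<ge> e" by blast
  have big: "padic_abs p (X n) \<ge> e" if n: "n \<ge> N" for n
  proof -
    have "padic_abs p (X n0) \<le> max (padic_abs p (X n)) (padic_abs p (X n0 - X n))"
      using ultra[OF p, of "X n" "X n0 - X n"] by simp
    moreover have "padic_abs p (X n0 - X n) < e" using N n n0 by blast
    ultimately show ?thesis using n0 by linarith
  qed
  have "\<forall>n\<ge>N. X n \<noteq> 0 \<and> padic_ord p (X n) \<le> \<lceil>- log (real p) e\<rceil>"
  proof (intro allI impI conjI)
    fix n assume n: "n \<ge> N"
    from big[OF n] e show xn: "X n \<noteq> 0" by (auto simp: padic_abs_def)
    have "e \<le> real p powr (- real_of_int (padic_ord p (X n)))" using big[OF n] xn by (simp add: padic_abs_def)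
    hence "log (real p) e \<le> log (real p) (real p powr (- real_of_int (padic_ord p (X n))))"
      using e p1 by (subst log_le_cancel_iff) auto
    hence "log (real p) e \<le> - real_of_int (padic_ord p (X n))" using p1 by simp
    thus "padic_ord p (X n) \<le> \<lceil>- log (real p) e\<rceil>" by linarith
  qed
  thus ?thesis by blast
qed

lemma null_ord:
  assumes p: "prime p" and nl: "padic_null p W"
  shows "\<exists>N. \<forall>n\<ge>N. W n = 0 \<or> padic_ord p (W n) > K"
proof -
  have p1: "real p > 1" using p prime_gt_1_nat by simp
  have "real p powr (- real_of_int K) > 0" using p1 by simp
  with nl obtain N where N: "\<forall>n\<ge>N. padic_abs p (W n) < real p powr (- real_of_int K)"
    unfolding padic_null_def by blast
  have "W n = 0 \<or> padic_ord p (W n) > K" if "n \<ge> N" for n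
  proof (cases "W n = 0")
    case False
    hence "real p powr (- real_of_int (padic_ord p (W n))) < real p powr (- real_of_int K)"
      using N[rule_format, OF that] False by (simp add: padic_abs_def)
    hence "- real_of_int (padic_ord p (W n)) < - real_of_int K" using p1 by simp
    thus ?thesis by simp
  qed simp
  thus ?thesis by blast
qed

lemma not_sol:
  assumes p: "prime p" and a: "a \<noteq> 0" and c: "c \<noteq> 0"
    and oa: "odd (padic_ord p a)" and oac: "padic_ord p a + padic_ord p c = 0"
  shows "\<not> padic_soluble p B a c"
proof
  assume "padic_soluble p B a c"
  then obtain X Y Z where CX: "padic_cauchy p X" and CY: "padic_cauchy p Y"
    and nn: "\<not> (padic_null p X \<and> padic_null p Y)"
    and nl: "padic_null p (\<lambda>n. Z n ^ 2 - quartic a (of_int B) c (X n) (Y n))"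
    unfolding padic_soluble_def by blast
  have "\<exists>L N. \<forall>n\<ge>N. (X n \<noteq> 0 \<and> padic_ord p (X n) \<le> L) \<or> (Y n \<noteq> 0 \<and> padic_ord p (Y n) \<le> L)"
  proof (cases "padic_null p X")
    case False
    from bounded_below[OF p CX False] show ?thesis by blast
  next
    case True
    hence "\<not> padic_null p Y" using nn by blast
    from bounded_below[OF p CY this] show ?thesis by blast
  qed
  then obtain L N1 where N1: "\<forall>n\<ge>N1. (X n \<noteq> 0 \<and> padic_ord p (X n) \<le> L) \<or> (Y n \<noteq> 0 \<and> padic_ord p (Y n) \<le> L)" by blast
  from null_ord[OF p nl, of "\<bar>padic_ord p a\<bar> + 4*L"] obtain N2 where
    N2: "\<forall>n\<ge>N2. Z n ^ 2 - quartic a (of_int B) c (X n) (Y n) = 0 \<or> padic_ord p (Z n ^ 2 - quartic a (of_int B) c (X n) (Y n)) > \<bar>padic_ord p a\<bar> + 4*L" by blast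
  show False
    using pointwise[OF p a c oa oac, of "X (max N1 N2)" L "Y (max N1 N2)" "Z (max N1 N2)" B]
      N1 N2 by auto
qed


lemma int_crit:
  fixes x :: rat
  assumes H: "\<And>p. prime p \<Longrightarrow> padic_ord p x \<ge> 0"
  shows "x \<in> \<int>"
proof -
  obtain n d where q: "quotient_of x = (n,d)" by (cases "quotient_of x") auto
  have x: "x = of_int n / of_int d" using quotient_of_div[OF q] .
  have d: "d > 0" using quotient_of_denom_pos[OF q] .
  have cop: "coprime n d" using quotient_of_coprime[OF q] .
  have "d = 1"
  proof (rule ccontr)
    assume "d \<noteq> 1"
    hence "\<not> is_unit d" using d by simp
    then obtain r where r: "prime r" "r dvd d" using d prime_divisor_exists[of d] by auto
    define p where "p = nat r"
    have rp: "r = int p" using r prime_gt_0_int[OF r(1)] unfolding p_def by simp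
    have p: "prime p" using r(1) rp by simp
    have "\<not> r dvd n" using r cop by (meson coprime_common_divisor not_prime_unit)
    hence m0: "multiplicity (int p) n = 0" using rp by (simp add: not_dvd_imp_multiplicity_0)
    have "multiplicity (int p) d > 0" using r rp d
      by (simp add: prime_multiplicity_gt_zero_iff)
    hence "padic_ord p x < 0" unfolding padic_ord_def q using m0 by simp
    with H[OF p] show False by simp
  qed
  thus ?thesis using x by simp
qed

lemma unit_crit:
  fixes x :: rat
  assumes x: "x \<noteq> 0" and H: "\<And>p. prime p \<Longrightarrow> padic_ord p x = 0"
  shows "x^2 = 1"
proof -
  have "x \<in> \<int>" using H by (intro int_crit) simp
  then obtain n where n: "x = of_int n" by (auto elim: Ints_cases)
  have "padic_ord p (1/x) = 0" if p: "prime p" for p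
  proof -
    have "0 = padic_ord p (x * (1/x))" using x ord_int[OF p, of 1] by simp
    also have "\<dots> = padic_ord p x + padic_ord p (1/x)" using ord_mult[OF p, of x "1/x"] x by simp
    finally show ?thesis using H[OF p] by simp
  qed
  hence "1/x \<in> \<int>" by (intro int_crit) simp
  then obtain m where m: "1/x = of_int m" by (auto elim: Ints_cases)
  have "of_int (n*m) = (1::rat)" using n m x by (simp add: field_simps)
  hence "n*m = 1" by (simp only: of_int_eq_1_iff)
  hence "n = 1 \<or> n = -1" by (auto simp: zmult_eq_1_iff)
  thus ?thesis using n by auto
qed

lemma lemG:
  fixes a c s :: rat and M B a0 :: int
  assumes ac: "a * c = of_int M" and M: "M \<noteq> 0" and ls: "locally_soluble B a c"
    and s: "s \<noteq> 0" and sa: "s^2 * a = of_int a0"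
    and o: "\<And>p. prime p \<Longrightarrow> padic_ord p (of_int a0) \<le> 1"
  shows "c / s^2 \<in> \<int>"
proof (rule int_crit)
  fix p :: nat assume p: "prime p"
  have a: "a \<noteq> 0" and c: "c \<noteq> 0" using ac M by auto
  have a0: "(of_int a0::rat) \<noteq> 0" using sa s a by (metis mult_eq_0_iff power_not_zero)
  have c': "c / s^2 \<noteq> 0" using c s by simp
  have prod: "of_int a0 * (c / s^2) = of_int M"
  proof -
    have "of_int a0 * (c/s^2) = (s^2*a)*c/s^2" using sa by simp
    also have "\<dots> = a*c" using s by simp
    finally show ?thesis using ac by simp
  qed
  have e1: "padic_ord p (of_int a0) + padic_ord p (c/s^2) = int (multiplicity (int p) M)"
    using ord_mult[OF p a0 c'] prod ord_int[OF p] by simp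
  show "padic_ord p (c/s^2) \<ge> 0"
  proof (rule ccontr)
    assume neg: "\<not> ?thesis"
    have oa0: "padic_ord p (of_int a0) = 1" and mM: "multiplicity (int p) M = 0"
      using e1 neg o[OF p] by linarith+
    have "padic_ord p (of_int a0) = 2 * padic_ord p s + padic_ord p a"
      using sa ord_mult[OF p, of "s^2" a] ord_power[OF p s, of 2] s a by simp
    hence odd: "odd (padic_ord p a)" using oa0 by presburger
    have "padic_ord p a + padic_ord p c = 0" using ord_mult[OF p a c] ac ord_int[OF p, of M] mM by simp
    from not_sol[OF p a c odd this, of B] ls p show False unfolding locally_soluble_def by blast
  qed
qed

lemma sq_repr:
  fixes a :: rat assumes a: "a \<noteq> 0"
  obtains s :: rat and a0 :: int where "s \<noteq> 0" "s^2 * a = of_int a0"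
    "\<And>p. prime p \<Longrightarrow> 0 \<le> padic_ord p (of_int a0) \<and> padic_ord p (of_int a0) \<le> 1"
proof -
  obtain n d where nd: "d \<noteq> 0" "a = of_int n / of_int d" by (rule rat_repr)
  have n: "n \<noteq> 0" using a nd by auto
  define sq where "sq = square_part (n*d)"
  define sf where "sf = squarefree_part (n*d)"
  have dec: "n*d = sf * sq^2" unfolding sf_def sq_def by (rule squarefree_decompose)
  have sq: "sq \<noteq> 0" using n nd unfolding sq_def by simp
  define s where "s = (of_int d / of_int sq :: rat)"
  have s: "s \<noteq> 0" using sq nd unfolding s_def by simp
  have "s^2 * a = of_int (n*d) / (of_int sq)^2" using nd sq unfolding s_def
    by (simp add: field_simps power2_eq_square)
  also have "\<dots> = of_int sf" using dec sq by (simp add: field_simps)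
  finally have sa: "s^2 * a = of_int sf" .
  have "0 \<le> padic_ord p (of_int sf) \<and> padic_ord p (of_int sf) \<le> 1" if p: "prime p" for p
  proof -
    have "multiplicity (int p) sf \<le> Suc 0" unfolding sf_def
      by (rule prime_multiplicity_squarefree_part_le_Suc_0) (use p in simp)
    thus ?thesis using ord_int[OF p] by simp
  qed
  thus ?thesis using that s sa by blast
qed


theorem lemma3p1:
  fixes B M :: int
  assumes "M * (B ^ 2 - 4 * M) \<noteq> 0"
  shows "(\<forall>f \<in> W_Q M. locally_soluble B (fst f) (snd f) \<longrightarrow>
            (\<exists>!g. g \<in> F_set M \<and> form_equiv f g))
       \<and> (\<forall>a c. (a, c) \<in> W_Q M \<and> locally_soluble B a c \<and> a \<in> \<int> \<and>
            (\<forall>p::nat. prime p \<longrightarrow> 0 \<le> padic_ord p a \<and> padic_ord p a \<le> 1) \<longrightarrow> c \<in> \<int>)"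
proof (intro conjI ballI allI impI)
  have M: "M \<noteq> 0" using assms by auto
  {
    fix a c assume H: "(a, c) \<in> W_Q M \<and> locally_soluble B a c \<and> a \<in> \<int> \<and>
            (\<forall>p::nat. prime p \<longrightarrow> 0 \<le> padic_ord p a \<and> padic_ord p a \<le> 1)"
    then obtain a0 where a0: "a = of_int a0" by (auto elim: Ints_cases)
    have "c / 1^2 \<in> \<int>"
      by (rule lemG[of a c M B 1 a0]) (use H a0 M in \<open>auto simp: W_Q_def\<close>)
    thus "c \<in> \<int>" by simp
  }
  fix f assume fW: "f \<in> W_Q M" and ls: "locally_soluble B (fst f) (snd f)"
  obtain a c where f: "f = (a, c)" by (cases f)
  have ac: "a * c = of_int M" using fW f by (simp add: W_Q_def)
  have a: "a \<noteq> 0" using ac M by auto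
  show "\<exists>!g. g \<in> F_set M \<and> form_equiv f g"
  proof (rule ex_ex1I)
    obtain s a0 where s: "s \<noteq> 0" and sa: "s^2 * a = of_int a0"
      and o: "\<And>p. prime p \<Longrightarrow> 0 \<le> padic_ord p (of_int a0) \<and> padic_ord p (of_int a0) \<le> 1"
      using sq_repr[OF a] by blast
    have "c / s^2 \<in> \<int>" using lemG[of a c M B s a0] ac M ls f s sa o by auto
    then obtain c0 where c0: "c / s^2 = of_int c0" by (auto elim: Ints_cases)
    have "of_int (a0 * c0) = (s^2*a) * (c/s^2)" using sa c0 by simp
    also have "\<dots> = a * c" using s by simp
    finally have "a0 * c0 = M" using ac by (simp only: of_int_eq_iff)
    hence "(of_int a0, of_int c0) \<in> F_set M" using o unfolding F_set_def by blast
    moreover have "form_equiv f (of_int a0, of_int c0)" unfolding form_equiv_def f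
      using s sa c0 by (intro exI[of _ s]) auto
    ultimately show "\<exists>g. g \<in> F_set M \<and> form_equiv f g" by blast
  next
    fix g1 g2 assume g1: "g1 \<in> F_set M \<and> form_equiv f g1" and g2: "g2 \<in> F_set M \<and> form_equiv f g2"
    from g1 obtain a1 c1 where g1d: "g1 = (of_int a1, of_int c1)" "a1 * c1 = M"
      and o1: "\<And>p. prime p \<Longrightarrow> 0 \<le> padic_ord p (of_int a1) \<and> padic_ord p (of_int a1) \<le> 1"
      unfolding F_set_def by blast
    from g2 obtain a2 c2 where g2d: "g2 = (of_int a2, of_int c2)" "a2 * c2 = M"
      and o2: "\<And>p. prime p \<Longrightarrow> 0 \<le> padic_ord p (of_int a2) \<and> padic_ord p (of_int a2) \<le> 1"
      unfolding F_set_def by blast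
    from g1 obtain s1 where s1: "s1 \<noteq> 0" "of_int a1 = s1^2 * a" "of_int c1 = c / s1^2"
      unfolding form_equiv_def f g1d by auto
    from g2 obtain s2 where s2: "s2 \<noteq> 0" "of_int a2 = s2^2 * a" "of_int c2 = c / s2^2"
      unfolding form_equiv_def f g2d by auto
    define t where "t = s2 / s1"
    have t: "t \<noteq> 0" using s1 s2 unfolding t_def by simp
    have a12: "(of_int a2 :: rat) = t^2 * of_int a1" using s1 s2 unfolding t_def
      by (simp add: field_simps power2_eq_square)
    have a1: "(of_int a1::rat) \<noteq> 0" using s1 a by simp
    have "padic_ord p t = 0" if p: "prime p" for p
    proof -
      have "padic_ord p (of_int a2) = 2 * padic_ord p t + padic_ord p (of_int a1)"
        using a12 ord_mult[OF p, of "t^2" "of_int a1"] ord_power[OF p t, of 2] t a1 by simp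
      thus ?thesis using o1[OF p] o2[OF p] by linarith
    qed
    hence "t^2 = 1" using unit_crit[OF t] by blast
    hence ae: "(of_int a2::rat) = of_int a1" using a12 by simp
    have "a1 * c1 = a2 * c2" using g1d g2d by simp
    hence "a1 * c1 = a1 * c2" using ae by simp
    hence "(of_int c2::rat) = of_int c1" using a1 by simp
    thus "g1 = g2" using ae g1d g2d by simp
  qed
qed

end
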